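(* For every $t\ge 0$ and every collection $\Omega$ of functions, $$\rho_1\bigl(\mathsf{cr}^{(t)}\bigr)=\rho_1\bigl(\mathsf{GTL}_2^{(t)}(\Omega)\bigr).$$
   Context: Fix integers $n\ge 1$ and $\ell\ge 1$. A graph is a triple $G=(V_G,E_G,\mathrm{col}_G)$ with $V_G=[n]=\{1,\dots,n\}$, $E_G$ a set of unordered pairs of distinct vertices (undirected, no loops), and a vertex labelling $\mathrm{col}_G:V_G\to\mathbb R^\ell$; $N_G(v)=\{u:uv\in E_G\}$. Let $\mathcal G_1=\{(G,v):G \text{ a graph},\ v\in V_G\}$. Tensor language: let $\Omega$ be a collection of functions, each $f:\mathbb R^p\to\mathbb R$ for some $p\ge1$. Expressions are generated by $\varphi::=\mathbf 1_{x=y}\mid \mathbf 1_{x\neq y}\mid E(x,y)\mid P_s(x)\mid \varphi\cdot\varphi\mid \varphi+\varphi\mid a\cdot\varphi\mid f(\varphi_1,\dots,\varphi_p)\mid \sum_x\varphi$ ($s\in[\ell]$, $a\in\mathbb R$, $f\in\Omega$ of arity $p$), with the usual free variables ($\sum_x$ binds $x$). Semantics for a graph $G$ and valuation $\nu$ of the variables in $V_G$: $[\![E(x,y)]\!]^\nu_G=1$ if $\nu(x)\nu(y)\in E_G$ else $0$; $[\![P_s(x)]\!]^\nu_G=\mathrm{col}_G(\nu(x))_s$; $[\![\mathbf 1_{x\,\mathrm{op}\,y}]\!]^\nu_G=1$ if $\nu(x)\,\mathrm{op}\,\nu(y)$ else $0$; $\cdot,+,a\cdot,f$ act on values; $[\![\sum_x\varphi]\!]^\nu_G=\sum_{v\in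 V_G}[\![\varphi]\!]^{\nu[x\mapsto v]}_G$. Summation depth $\mathrm{sd}$: $0$ for atoms, maximum over components for $\cdot,+,f(\dots)$, unchanged by $a\cdot$, and $\mathrm{sd}(\sum_x\varphi)=\mathrm{sd}(\varphi)+1$. Guarded fragment $\mathsf{GTL}_2(\Omega)$: the smallest set of expressions, each with exactly one free variable, which is $x_1$ or $x_2$, containing $\mathbf 1_{x_i=x_i}$, $\mathbf 1_{x_i\ne x_i}$, $P_s(x_i)$ ($i\in\{1,2\}$, $s\in[\ell]$), and closed under: $\varphi\cdot\psi$, $\varphi+\psi$ when $\varphi,\psi$ have the same single free variable; $a\cdot\varphi$; $f(\varphi_1,\dots,\varphi_p)$ for $f\in\Omega$ when all $\varphi_j$ have the same single free variable; and $\sum_{x_j}\bigl(E(x_i,x_j)\cdot\varphi\bigr)$ where $\{i,j\}=\{1,2\}$ and $\varphi$ has free variable $x_j$. $\mathsf{GTL}_2^{(t)}(\Omega)$ is its subset of summation depth at most $t$. $\rho_1(\mathsf{GTL}_2^{(t)}(\Omega))$ is the set of pairs $((G,v),(H,w))\in\mathcal G_1\times\mathcal G_1$ such that $[\![\varphi]\!]^{x_1\mapsto v}_G=[\![\varphi]\!]^{x_1\mapsto w}_H$ for all $\varphi\in\mathsf{GTL}_2^{(t)}(\Omega)$ with free variable $x_1$. Color refinement: $\mathsf{cr}^{(0)}(G,v)=\mathrm{col}_G(v)$ and $\mathsf{cr}^{(t+1)}(G,v)=\bigl(\mathsf{cr}^{(t)}(G,v),\{\!\{\mathsf{cr}^{(t)}(G,u):u\in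 N_G(v)\}\!\}\bigr)$ (multiset), compared as formal objects across graphs. $\rho_1(\mathsf{cr}^{(t)})=\{((G,v),(H,w)):\mathsf{cr}^{(t)}(G,v)=\mathsf{cr}^{(t)}(H,w)\}$. *)

theory Defs
  imports Complex_Main "HOL-Library.Multiset"
begin

text \<open>A graph is a pair (E, col): E is a set of unordered pairs (two-element sets)
  of vertices, col assigns to each vertex a label in R^l, represented as a real list of
  length l (coordinate s, 1 <= s <= l, is the list entry at index s - 1).\<close>

type_synonym graph = "nat set set \<times> (nat \<Rightarrow> real list)"

definition edges :: "graph \<Rightarrow> nat set set" where "edges G = fst G"
definition col :: "graph \<Rightarrow> nat \<Rightarrow> real list" where "col G = snd G"

definition is_graph :: "nat \<Rightarrow> nat \<Rightarrow> graph \<Rightarrow> bool" where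
  "is_graph n l G \<longleftrightarrow>
     edges G \<subseteq> {{u, v} | u v. u \<in> {1..n} \<and> v \<in> {1..n} \<and> u \<noteq> v} \<and>
     (\<forall>v\<in>{1..n}. length (col G v) = l)"

definition nbrs :: "graph \<Rightarrow> nat \<Rightarrow> nat set" where
  "nbrs G v = {u. {u, v} \<in> edges G}"

definition G1 :: "nat \<Rightarrow> nat \<Rightarrow> (graph \<times> nat) set" where
  "G1 n l = {(G, v). is_graph n l G \<and> v \<in> {1..n}}"

text \<open>Variables are natural numbers (x_1 = 1, x_2 = 2). A function symbol carries the
  function f : R^p -> R itself (as a function on real lists).\<close>

datatype tl =
    EqI nat nat
  | NeqI nat nat
  | Edge nat nat
  | Lab nat nat
  | Mul tl tl
  | Add tl tl
  | Scal real tl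
  | Fn "real list \<Rightarrow> real" "tl list"
  | Sum nat tl

fun sem :: "nat \<Rightarrow> graph \<Rightarrow> (nat \<Rightarrow> nat) \<Rightarrow> tl \<Rightarrow> real" where
  "sem n G \<nu> (EqI x y) = (if \<nu> x = \<nu> y then 1 else 0)"
| "sem n G \<nu> (NeqI x y) = (if \<nu> x \<noteq> \<nu> y then 1 else 0)"
| "sem n G \<nu> (Edge x y) = (if {\<nu> x, \<nu> y} \<in> edges G then 1 else 0)"
| "sem n G \<nu> (Lab s x) = col G (\<nu> x) ! (s - 1)"
| "sem n G \<nu> (Mul a b) = sem n G \<nu> a * sem n G \<nu> b"
| "sem n G \<nu> (Add a b) = sem n G \<nu> a + sem n G \<nu> b"
| "sem n G \<nu> (Scal c a) = c * sem n G \<nu> a"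
| "sem n G \<nu> (Fn f as) = f (map (sem n G \<nu>) as)"
| "sem n G \<nu> (Sum x a) = (\<Sum>v\<in>{1..n}. sem n G (\<nu>(x := v)) a)"

fun sd :: "tl \<Rightarrow> nat" where
  "sd (EqI x y) = 0"
| "sd (NeqI x y) = 0"
| "sd (Edge x y) = 0"
| "sd (Lab s x) = 0"
| "sd (Mul a b) = max (sd a) (sd b)"
| "sd (Add a b) = max (sd a) (sd b)"
| "sd (Scal c a) = sd a"
| "sd (Fn f as) = fold max (map sd as) 0"
| "sd (Sum x a) = sd a + 1"

text \<open>Omega: a set of pairs (p, f) where f : R^p -> R (f applied to lists of length p).
  The guarded fragment GTL_2(Omega): pairs (phi, i) meaning phi is in the fragment
  with single free variable x_i.\<close>

inductive_set gtl2 :: "nat \<Rightarrow> (nat \<times> (real list \<Rightarrow> real)) set \<Rightarrow> (tl \<times> nat) set"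
  for l :: nat and \<Omega> :: "(nat \<times> (real list \<Rightarrow> real)) set" where
  eq:   "i \<in> {1, 2} \<Longrightarrow> (EqI i i, i) \<in> gtl2 l \<Omega>"
| neq:  "i \<in> {1, 2} \<Longrightarrow> (NeqI i i, i) \<in> gtl2 l \<Omega>"
| lab:  "i \<in> {1, 2} \<Longrightarrow> s \<in> {1..l} \<Longrightarrow> (Lab s i, i) \<in> gtl2 l \<Omega>"
| mul:  "(a, i) \<in> gtl2 l \<Omega> \<Longrightarrow> (b, i) \<in> gtl2 l \<Omega> \<Longrightarrow> (Mul a b, i) \<in> gtl2 l \<Omega>"
| add:  "(a, i) \<in> gtl2 l \<Omega> \<Longrightarrow> (b, i) \<in> gtl2 l \<Omega> \<Longrightarrow> (Add a b, i) \<in> gtl2 l \<Omega>"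
| scal: "(a, i) \<in> gtl2 l \<Omega> \<Longrightarrow> (Scal c a, i) \<in> gtl2 l \<Omega>"
| fn:   "(p, f) \<in> \<Omega> \<Longrightarrow> length as = p \<Longrightarrow> (\<forall>a\<in>set as. (a, i) \<in> gtl2 l \<Omega>)
         \<Longrightarrow> (Fn f as, i) \<in> gtl2 l \<Omega>"
| agg:  "{i, j} = {1, 2} \<Longrightarrow> (a, j) \<in> gtl2 l \<Omega>
         \<Longrightarrow> (Sum j (Mul (Edge i j) a), i) \<in> gtl2 l \<Omega>"

definition rho1_gtl :: "nat \<Rightarrow> nat \<Rightarrow> (nat \<times> (real list \<Rightarrow> real)) set \<Rightarrow> nat
    \<Rightarrow> ((graph \<times> nat) \<times> (graph \<times> nat)) set" where
  "rho1_gtl n l \<Omega> t =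
     {((G, v), (H, w)). (G, v) \<in> G1 n l \<and> (H, w) \<in> G1 n l \<and>
        (\<forall>\<phi>. (\<phi>, 1) \<in> gtl2 l \<Omega> \<and> sd \<phi> \<le> t \<longrightarrow>
              sem n G (\<lambda>_. v) \<phi> = sem n H (\<lambda>_. w) \<phi>)}"

datatype crcol = Base "real list" | Ref crcol "crcol multiset"

fun cr :: "nat \<Rightarrow> graph \<Rightarrow> nat \<Rightarrow> crcol" where
  "cr 0 G v = Base (col G v)"
| "cr (Suc t) G v = Ref (cr t G v) (image_mset (\<lambda>u. cr t G u) (mset_set (nbrs G v)))"

definition rho1_cr :: "nat \<Rightarrow> nat \<Rightarrow> nat \<Rightarrow> ((graph \<times> nat) \<times> (graph \<times> nat)) set" where
  "rho1_cr n l t =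
     {((G, v), (H, w)). (G, v) \<in> G1 n l \<and> (H, w) \<in> G1 n l \<and> cr t G v = cr t H w}"

end

theory Submission
  imports Defs
begin

lemma nbrs_sub: "is_graph n l G \<Longrightarrow> nbrs G v \<subseteq> {1..n}"
proof
  fix u assume g: "is_graph n l G" and u: "u \<in> nbrs G v"
  then have "{u,v} \<in> edges G" by (simp add: nbrs_def)
  then obtain a b where ab: "{u,v} = {a,b}" "a \<in> {1..n}" "b \<in> {1..n}"
    using g unfolding is_graph_def by blast
  have "u \<in> {a,b}" using ab(1) by blast
  then show "u \<in> {1..n}" using ab by blast
qed

lemma nbrs_fin: "is_graph n l G \<Longrightarrow> finite (nbrs G v)"
  by (rule finite_subset[OF nbrs_sub]) simp_all

lemma sum_nbrs:
  assumes "is_graph n l G"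
  shows "(\<Sum>u\<in>{1..n}. (if {v,u} \<in> edges G then 1 else 0) * F u) = (\<Sum>u\<in>nbrs G v. F u::real)"
proof -
  have "(\<Sum>u\<in>{1..n}. (if {v,u} \<in> edges G then 1 else 0) * F u) = (\<Sum>u\<in>{1..n}. if u \<in> nbrs G v then F u else 0)"
    by (rule sum.cong) (auto simp: nbrs_def insert_commute)
  also have "\<dots> = (\<Sum>u\<in>{1..n} \<inter> nbrs G v. F u)" by (subst sum.inter_restrict) auto
  also have "{1..n} \<inter> nbrs G v = nbrs G v" using nbrs_sub[OF assms] by blast
  finally show ?thesis .
qed

lemma count_card: "finite A \<Longrightarrow> count (image_mset f (mset_set A)) d = card {u\<in>A. f u = d}"
proof -
  assume A: "finite A"
  have "count (image_mset f (mset_set A)) d = (\<Sum>y\<in>f -` {d} \<inter> A. 1)"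
    unfolding count_image_mset using A by (intro sum.cong) auto
  also have "\<dots> = card (f -` {d} \<inter> A)" by simp
  also have "f -` {d} \<inter> A = {u\<in>A. f u = d}" by blast
  finally show ?thesis .
qed

lemma fold_max_ge0: "(a::nat) \<le> fold max xs a"
  by (induction xs arbitrary: a) (auto intro: le_trans[OF max.cobounded2])

lemma fold_max_ge: "x \<in> set xs \<Longrightarrow> (x::nat) \<le> fold max xs a"
proof (induction xs arbitrary: a)
  case (Cons y ys)
  then show ?case using fold_max_ge0[of "max y a" ys] by (auto intro: le_trans[OF max.cobounded1])
qed simp

lemma image_mset_transfer:
  "image_mset g1 A = image_mset g2 B \<Longrightarrow> (\<forall>x\<in>#A. \<forall>y\<in>#B. g1 x = g2 y \<longrightarrow> f1 x = f2 y)
    \<Longrightarrow> image_mset f1 A = image_mset f2 B"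
proof (induction A arbitrary: B)
  case empty then show ?case by simp
next
  case (add x A)
  have "g1 x \<in># image_mset g2 B" unfolding add.prems(1)[symmetric] by simp
  then obtain y where y: "y \<in># B" "g2 y = g1 x" by auto
  then obtain B' where B: "B = add_mset y B'" by (metis mset_add)
  have "image_mset g1 A = image_mset g2 B'" using add.prems(1) B y(2) by simp
  moreover have "\<forall>x\<in>#A. \<forall>y\<in>#B'. g1 x = g2 y \<longrightarrow> f1 x = f2 y" using add.prems(2) B by auto
  ultimately have "image_mset f1 A = image_mset f2 B'" using add.IH by blast
  moreover have "f1 x = f2 y" using add.prems(2) B y by auto
  ultimately show ?case using B by simp
qed

lemma cr_le: "t' \<le> t \<Longrightarrow> cr t G v = cr t H w \<Longrightarrow> cr t' G v = cr t' H w"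
proof (induction t)
  case 0 then show ?case by simp
next
  case (Suc t)
  then show ?case by (cases "t' = Suc t") auto
qed

lemma sound:
  assumes "(\<phi>, i) \<in> gtl2 l \<Omega>"
  shows "\<forall>t G H v w \<nu> \<mu>. sd \<phi> \<le> t \<longrightarrow> (G,v) \<in> G1 n l \<longrightarrow> (H,w) \<in> G1 n l \<longrightarrow>
     cr t G v = cr t H w \<longrightarrow> \<nu> i = v \<longrightarrow> \<mu> i = w \<longrightarrow> sem n G \<nu> \<phi> = sem n H \<mu> \<phi>"
  using assms
proof induction
  case (lab i s)
  show ?case
  proof (intro allI impI)
    fix t G H v w \<nu> \<mu>
    assume "sd (Lab s i) \<le> t" "(G,v) \<in> G1 n l" "(H,w) \<in> G1 n l" "cr t G v = cr t H w"
      "\<nu> i = v" "\<mu> i = w"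
    then show "sem n G \<nu> (Lab s i) = sem n H \<mu> (Lab s i)" using cr_le[of 0 t G v H w] by simp
  qed
next
  case (fn p f as i)
  show ?case
  proof (intro allI impI)
    fix t G H v w \<nu> \<mu>
    assume a: "sd (Fn f as) \<le> t" "(G,v) \<in> G1 n l" "(H,w) \<in> G1 n l" "cr t G v = cr t H w"
      "\<nu> i = v" "\<mu> i = w"
    have "map (sem n G \<nu>) as = map (sem n H \<mu>) as"
    proof (rule map_cong[OF refl])
      fix a assume "a \<in> set as"
      moreover have "sd a \<le> t" using fold_max_ge[of "sd a" "map sd as" 0] a(1) \<open>a \<in> set as\<close> by simp
      ultimately show "sem n G \<nu> a = sem n H \<mu> a" using fn.IH a by blast
    qed
    then show "sem n G \<nu> (Fn f as) = sem n H \<mu> (Fn f as)" unfolding sem.simps by (rule arg_cong[where f=f])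
  qed
next
  case (agg i j a)
  have ij: "i \<noteq> j" using agg.hyps(1) by (auto simp: doubleton_eq_iff)
  show ?case
  proof (intro allI impI)
    fix t G H v w \<nu> \<mu>
    assume a: "sd (Sum j (Mul (Edge i j) a)) \<le> t" "(G,v) \<in> G1 n l" "(H,w) \<in> G1 n l" "cr t G v = cr t H w"
      "\<nu> i = v" "\<mu> i = w"
    obtain t' where t: "t = Suc t'" "sd a \<le> t'" using a(1) by (cases t) auto
    have gG: "is_graph n l G" and gH: "is_graph n l H" using a(2,3) by (auto simp: G1_def)
    have sG: "sem n G \<nu> (Sum j (Mul (Edge i j) a)) = (\<Sum>u\<in>nbrs G v. sem n G (\<nu>(j:=u)) a)"
      using ij a(5) sum_nbrs[OF gG, of v "\<lambda>u. sem n G (\<nu>(j:=u)) a"] by simp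
    have sH: "sem n H \<mu> (Sum j (Mul (Edge i j) a)) = (\<Sum>u\<in>nbrs H w. sem n H (\<mu>(j:=u)) a)"
      using ij a(6) sum_nbrs[OF gH, of w "\<lambda>u. sem n H (\<mu>(j:=u)) a"] by simp
    have im: "image_mset (cr t' G) (mset_set (nbrs G v)) = image_mset (cr t' H) (mset_set (nbrs H w))"
      using a(4) t(1) by simp
    have "image_mset (\<lambda>u. sem n G (\<nu>(j:=u)) a) (mset_set (nbrs G v))
        = image_mset (\<lambda>u. sem n H (\<mu>(j:=u)) a) (mset_set (nbrs H w))"
    proof (rule image_mset_transfer[OF im], intro ballI impI)
      fix x y assume x: "x \<in># mset_set (nbrs G v)" and y: "y \<in># mset_set (nbrs H w)"
        and c: "cr t' G x = cr t' H y"
      have "x \<in> nbrs G v" "y \<in> nbrs H w" using x y nbrs_fin[OF gG] nbrs_fin[OF gH] by auto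
      then have "x \<in> {1..n}" "y \<in> {1..n}" using nbrs_sub[OF gG] nbrs_sub[OF gH] by blast+
      then have "(G,x) \<in> G1 n l" "(H,y) \<in> G1 n l" using gG gH by (auto simp: G1_def)
      then show "sem n G (\<nu>(j:=x)) a = sem n H (\<mu>(j:=y)) a" using agg.IH[rule_format, of t' G x H y "\<nu>(j:=x)" "\<mu>(j:=y)"] t(2) c by simp
    qed
    then show "sem n G \<nu> (Sum j (Mul (Edge i j) a)) = sem n H \<mu> (Sum j (Mul (Edge i j) a))"
      unfolding sG sH sum_unfold_sum_mset by simp
  qed
next
  case (mul a i b)
  then show ?case by (metis max.bounded_iff sd.simps(5) sem.simps(5))
next
  case (add a i b)
  then show ?case by (metis max.bounded_iff sd.simps(6) sem.simps(6))
next
  case (scal a i c)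
  then show ?case by (metis sd.simps(7) sem.simps(7))
qed simp_all

lemma prod_formula:
  assumes "finite D" "i \<in> {1,2}" "\<forall>d\<in>D. (f d, i) \<in> gtl2 l \<Omega> \<and> sd (f d) \<le> t"
  shows "\<exists>\<psi>. (\<psi>, i) \<in> gtl2 l \<Omega> \<and> sd \<psi> \<le> t \<and> (\<forall>G \<nu>. sem n G \<nu> \<psi> = (\<Prod>d\<in>D. sem n G \<nu> (f d)))"
  using assms(1,3)
proof (induction D rule: finite_induct)
  case empty
  have "(EqI i i, i) \<in> gtl2 l \<Omega>" using assms(2) by (rule gtl2.eq)
  then show ?case by (intro exI[of _ "EqI i i"]) simp
next
  case (insert x D)
  then obtain \<psi> where p: "(\<psi>,i) \<in> gtl2 l \<Omega>" "sd \<psi> \<le> t" "\<forall>G \<nu>. sem n G \<nu> \<psi> = (\<Prod>d\<in>D. sem n G \<nu> (f d))"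
    by blast
  have fx: "(f x, i) \<in> gtl2 l \<Omega>" "sd (f x) \<le> t" using insert.prems by auto
  have "(Mul (f x) \<psi>, i) \<in> gtl2 l \<Omega>" using fx(1) p(1) by (rule gtl2.mul)
  moreover have "sd (Mul (f x) \<psi>) \<le> t" using fx(2) p(2) by simp
  moreover have "\<forall>G \<nu>. sem n G \<nu> (Mul (f x) \<psi>) = (\<Prod>d\<in>insert x D. sem n G \<nu> (f d))"
    using p(3) insert.hyps by simp
  ultimately show ?case by blast
qed

lemma eq_ind:
  assumes "finite X" "i \<in> {1,2}" "(\<phi>,i) \<in> gtl2 l \<Omega>" "sd \<phi> \<le> t"
    "\<forall>(G,v)\<in>X. \<forall>\<nu>. \<nu> i = v \<longrightarrow> sem n G \<nu> \<phi> = g (G,v)"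
  shows "\<exists>\<psi>. (\<psi>,i) \<in> gtl2 l \<Omega> \<and> sd \<psi> \<le> t \<and>
     (\<forall>(G,v)\<in>X. \<forall>\<nu>. \<nu> i = v \<longrightarrow> sem n G \<nu> \<psi> = (if g (G,v) = m then 1 else 0))"
proof -
  let ?V = "g ` X - {m}"
  define f where "f b = Scal (1/(m-b)) (Add \<phi> (Scal (-b) (EqI i i)))" for b
  have "\<forall>b\<in>?V. (f b, i) \<in> gtl2 l \<Omega> \<and> sd (f b) \<le> t" using assms
    by (auto simp: f_def intro!: gtl2.scal gtl2.add gtl2.eq)
  from prod_formula[OF _ assms(2) this] obtain \<psi> where \<psi>: "(\<psi>,i) \<in> gtl2 l \<Omega>" "sd \<psi> \<le> t"
    "\<forall>G \<nu>. sem n G \<nu> \<psi> = (\<Prod>b\<in>?V. sem n G \<nu> (f b))" using assms(1) by blast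
  have key: "sem n G \<nu> \<psi> = (if g (G,v) = m then 1 else 0)" if x: "(G,v) \<in> X" "\<nu> i = v" for G v \<nu>
  proof -
    have "sem n G \<nu> \<psi> = (\<Prod>b\<in>?V. (g (G,v) - b)/(m-b))"
    proof -
      have e: "sem n G \<nu> \<phi> = g (G,v)" using assms(5) x by auto
      have "sem n G \<nu> \<psi> = (\<Prod>b\<in>?V. sem n G \<nu> (f b))" using \<psi>(3) by blast
      also have "\<dots> = (\<Prod>b\<in>?V. (g (G,v) - b)/(m-b))"
      proof (rule prod.cong[OF refl])
        fix b assume "b \<in> ?V"
        show "sem n G \<nu> (f b) = (g (G,v) - b)/(m-b)" unfolding f_def sem.simps e
          by (simp add: divide_inverse mult.commute)
      qed
      finally show ?thesis .
    qed
    also have "\<dots> = (if g (G,v) = m then 1 else 0)"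
    proof (cases "g (G,v) = m")
      case True then show ?thesis by (auto intro!: prod.neutral)
    next
      case False
      then have "g (G,v) \<in> ?V" using x by auto
      then show ?thesis using False assms(1) by (auto simp: prod_zero_iff)
    qed
    finally show "sem n G \<nu> \<psi> = (if g (G,v) = m then 1 else 0)" .
  qed
  show ?thesis by (intro exI[of _ \<psi>] conjI \<psi>(1,2)) (auto simp: key[OF _ refl])
qed

lemma prod_ind: "finite S \<Longrightarrow> (\<Prod>s\<in>S. (if P s then 1 else 0::real)) = (if \<forall>s\<in>S. P s then 1 else 0)"
  by (induction S rule: finite_induct) auto


lemma complete:
  "\<forall>i X c. (i::nat) \<in> {1,2} \<longrightarrow> finite X \<longrightarrow> X \<subseteq> G1 n l \<longrightarrow>
    (\<exists>\<chi>. (\<chi>,i) \<in> gtl2 l \<Omega> \<and> sd \<chi> \<le> t \<and>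
       (\<forall>(G,v)\<in>X. \<forall>\<nu>. \<nu> i = v \<longrightarrow> sem n G \<nu> \<chi> = (if cr t G v = c then 1 else 0)))"
proof (induction t)
  case 0
  show ?case
  proof (intro allI impI)
    fix i :: nat and X c assume i: "i \<in> {1,2}" and X: "finite X" "X \<subseteq> G1 n l"
    have gX: "is_graph n l G \<and> v \<in> {1..n}" if "(G,v) \<in> X" for G v using X(2) that by (auto simp: G1_def)
    show "\<exists>\<chi>. (\<chi>,i) \<in> gtl2 l \<Omega> \<and> sd \<chi> \<le> 0 \<and>
       (\<forall>(G,v)\<in>X. \<forall>\<nu>. \<nu> i = v \<longrightarrow> sem n G \<nu> \<chi> = (if cr 0 G v = c then 1 else 0))"
    proof (cases "\<exists>L. c = Base L \<and> length L = l")
      case True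
      then obtain L where c: "c = Base L" "length L = l" by auto
      have "\<forall>s\<in>{1..l}. \<exists>\<psi>. (\<psi>,i) \<in> gtl2 l \<Omega> \<and> sd \<psi> \<le> 0 \<and>
         (\<forall>(G,v)\<in>X. \<forall>\<nu>. \<nu> i = v \<longrightarrow> sem n G \<nu> \<psi> =
             (if (\<lambda>(G,v). col G v ! (s-1)) (G,v) = L!(s-1) then 1 else 0))"
      proof
        fix s assume s: "s \<in> {1..l}"
        have lab: "(Lab s i, i) \<in> gtl2 l \<Omega>" using i s by (rule gtl2.lab)
        show "\<exists>\<psi>. (\<psi>,i) \<in> gtl2 l \<Omega> \<and> sd \<psi> \<le> 0 \<and>
         (\<forall>(G,v)\<in>X. \<forall>\<nu>. \<nu> i = v \<longrightarrow> sem n G \<nu> \<psi> =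
             (if (\<lambda>(G,v). col G v ! (s-1)) (G,v) = L!(s-1) then 1 else 0))"
          by (rule eq_ind[OF X(1) i lab, where g="\<lambda>(G,v). col G v ! (s-1)" and m="L!(s-1)" and t=0]) auto
      qed
      from bchoice[OF this] obtain f where f: "\<forall>s\<in>{1..l}. (f s,i) \<in> gtl2 l \<Omega> \<and> sd (f s) \<le> 0 \<and>
         (\<forall>(G,v)\<in>X. \<forall>\<nu>. \<nu> i = v \<longrightarrow> sem n G \<nu> (f s) =
             (if (\<lambda>(G,v). col G v ! (s-1)) (G,v) = L!(s-1) then 1 else 0))" by blast
      have "\<forall>s\<in>{1..l}. (f s, i) \<in> gtl2 l \<Omega> \<and> sd (f s) \<le> 0" using f by blast
      from prod_formula[OF _ i this] obtain \<psi> where \<psi>: "(\<psi>,i) \<in> gtl2 l \<Omega>" "sd \<psi> \<le> 0"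
        "\<forall>G \<nu>. sem n G \<nu> \<psi> = (\<Prod>s\<in>{1..l}. sem n G \<nu> (f s))" by blast
      have key: "sem n G \<nu> \<psi> = (if cr 0 G v = c then 1 else 0)" if x: "(G,v) \<in> X" "\<nu> i = v" for G v \<nu>
      proof -
        have len: "length (col G v) = l" using gX[OF x(1)] by (auto simp: is_graph_def)
        have "sem n G \<nu> \<psi> = (\<Prod>s\<in>{1..l}. sem n G \<nu> (f s))" using \<psi>(3) by blast
        also have "\<dots> = (\<Prod>s\<in>{1..l}. (if col G v ! (s-1) = L!(s-1) then 1 else 0))"
        proof (rule prod.cong[OF refl])
          fix s assume "s \<in> {1..l}"
          with f have h: "\<forall>(G,v)\<in>X. \<forall>\<nu>. \<nu> i = v \<longrightarrow> sem n G \<nu> (f s) =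
             (if (\<lambda>(G,v). col G v ! (s-1)) (G,v) = L!(s-1) then 1 else 0)" by blast
          from bspec[OF h x(1)] x(2)
          show "sem n G \<nu> (f s) = (if col G v ! (s-1) = L!(s-1) then 1 else 0)" by simp
        qed
        also have "\<dots> = (if \<forall>s\<in>{1..l}. col G v ! (s-1) = L!(s-1) then 1 else 0)"
          by (rule prod_ind) simp
        also have "(\<forall>s\<in>{1..l}. col G v ! (s-1) = L!(s-1)) \<longleftrightarrow> col G v = L"
        proof
          assume h: "\<forall>s\<in>{1..l}. col G v ! (s-1) = L!(s-1)"
          show "col G v = L"
          proof (rule nth_equalityI)
            show "length (col G v) = length L" using len c by simp
            fix k assume "k < length (col G v)"
            then have "Suc k \<in> {1..l}" using len by auto
            then show "col G v ! k = L ! k" using h by fastforce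
          qed
        qed simp
        finally show ?thesis using c by simp
      qed
      show ?thesis by (intro exI[of _ \<psi>] conjI \<psi>(1,2)) (auto simp: key[OF _ refl])
    next
      case False
      have z: "(NeqI i i, i) \<in> gtl2 l \<Omega>" using i by (rule gtl2.neq)
      have "cr 0 G v \<noteq> c" if "(G,v) \<in> X" for G v
        using gX[OF that] False by (auto simp: is_graph_def)
      then show ?thesis using z by (intro exI[of _ "NeqI i i"]) auto
    qed
  qed
next
  case (Suc t)
  show ?case
  proof (intro allI impI)
    fix i :: nat and X c assume i: "i \<in> {1,2}" and X: "finite X" "X \<subseteq> G1 n l"
    have gX: "is_graph n l G \<and> v \<in> {1..n}" if "(G,v) \<in> X" for G v using X(2) that by (auto simp: G1_def)
    show "\<exists>\<chi>. (\<chi>,i) \<in> gtl2 l \<Omega> \<and> sd \<chi> \<le> Suc t \<and>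
       (\<forall>(G,v)\<in>X. \<forall>\<nu>. \<nu> i = v \<longrightarrow> sem n G \<nu> \<chi> = (if cr (Suc t) G v = c then 1 else 0))"
    proof (cases "\<exists>c0 M. c = Ref c0 M")
      case False
      have z: "(NeqI i i, i) \<in> gtl2 l \<Omega>" using i by (rule gtl2.neq)
      have "cr (Suc t) G v \<noteq> c" for G v using False by auto
      then show ?thesis using z by (intro exI[of _ "NeqI i i"]) auto
    next
      case True
      then obtain c0 M where c: "c = Ref c0 M" by blast
      define j :: nat where "j = (if i = 1 then 2 else 1)"
      have ij: "{i,j} = {1,2}" "j \<in> {1,2}" "i \<noteq> j" using i by (auto simp: j_def)
      define Y where "Y = (\<Union>x\<in>X. (\<lambda>u. (fst x, u)) ` nbrs (fst x) (snd x))"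
      have finY: "finite Y" unfolding Y_def using X(1) gX nbrs_fin by fastforce
      have Yin: "(G,u) \<in> Y" if "(G,v) \<in> X" "u \<in> nbrs G v" for G v u
        unfolding Y_def using that by force
      have YG: "Y \<subseteq> G1 n l"
      proof
        fix y assume "y \<in> Y"
        then obtain G v u where y: "y = (G,u)" "(G,v) \<in> X" "u \<in> nbrs G v" unfolding Y_def by force
        then have "is_graph n l G" "u \<in> {1..n}" using gX nbrs_sub by blast+
        then show "y \<in> G1 n l" using y by (simp add: G1_def)
      qed
      define N where "N G v = image_mset (cr t G) (mset_set (nbrs G v))" for G v
      define D where "D = set_mset M \<union> (\<Union>x\<in>X. cr t (fst x) ` nbrs (fst x) (snd x))"
      have finD: "finite D" unfolding D_def using X(1) gX nbrs_fin by fastforce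
      have "\<forall>d\<in>D. \<exists>\<chi>. (\<chi>,j) \<in> gtl2 l \<Omega> \<and> sd \<chi> \<le> t \<and>
         (\<forall>(G,u)\<in>Y. \<forall>\<nu>. \<nu> j = u \<longrightarrow> sem n G \<nu> \<chi> = (if cr t G u = d then 1 else 0))"
        using Suc.IH ij(2) finY YG by blast
      from bchoice[OF this] obtain \<chi> where \<chi>: "\<forall>d\<in>D. (\<chi> d,j) \<in> gtl2 l \<Omega> \<and> sd (\<chi> d) \<le> t \<and>
         (\<forall>(G,u)\<in>Y. \<forall>\<nu>. \<nu> j = u \<longrightarrow> sem n G \<nu> (\<chi> d) = (if cr t G u = d then 1 else 0))" by blast
      define \<kappa> where "\<kappa> d = Sum j (Mul (Edge i j) (\<chi> d))" for d
      have \<kappa>g: "(\<kappa> d, i) \<in> gtl2 l \<Omega>" "sd (\<kappa> d) \<le> Suc t" if "d \<in> D" for d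
      proof -
        show "(\<kappa> d, i) \<in> gtl2 l \<Omega>" unfolding \<kappa>_def using ij(1) by (rule gtl2.agg) (use \<chi> that in blast)
        show "sd (\<kappa> d) \<le> Suc t" unfolding \<kappa>_def using \<chi> that by simp
      qed
      have \<kappa>v: "sem n G \<nu> (\<kappa> d) = real (count (N G v) d)"
        if d: "d \<in> D" and x: "(G,v) \<in> X" "\<nu> i = v" for d G v \<nu>
      proof -
        have g: "is_graph n l G" using gX[OF x(1)] by blast
        have h: "\<forall>(G,u)\<in>Y. \<forall>\<nu>. \<nu> j = u \<longrightarrow> sem n G \<nu> (\<chi> d) = (if cr t G u = d then 1 else 0)"
          using \<chi> d by blast
        have "sem n G \<nu> (\<kappa> d) = (\<Sum>u\<in>{1..n}. (if {v,u} \<in> edges G then 1 else 0) * sem n G (\<nu>(j:=u)) (\<chi> d))"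
          unfolding \<kappa>_def using ij(3) x(2) by simp
        also have "\<dots> = (\<Sum>u\<in>nbrs G v. sem n G (\<nu>(j:=u)) (\<chi> d))" by (rule sum_nbrs[OF g])
        also have "\<dots> = (\<Sum>u\<in>nbrs G v. (if cr t G u = d then 1 else 0))"
        proof (rule sum.cong[OF refl])
          fix u assume "u \<in> nbrs G v"
          then have "(G,u) \<in> Y" using Yin x(1) by blast
          from bspec[OF h this] show "sem n G (\<nu>(j:=u)) (\<chi> d) = (if cr t G u = d then 1 else 0)" by simp
        qed
        also have "\<dots> = real (card {u\<in>nbrs G v. cr t G u = d})"
          using nbrs_fin[OF g] by (simp add: sum.inter_filter[symmetric])
        also have "\<dots> = real (count (N G v) d)" unfolding N_def by (simp add: count_card[OF nbrs_fin[OF g]])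
        finally show ?thesis .
      qed
      have "\<forall>d\<in>D. \<exists>\<psi>. (\<psi>,i) \<in> gtl2 l \<Omega> \<and> sd \<psi> \<le> Suc t \<and>
         (\<forall>(G,v)\<in>X. \<forall>\<nu>. \<nu> i = v \<longrightarrow> sem n G \<nu> \<psi> =
            (if (\<lambda>(G,v). real (count (N G v) d)) (G,v) = real (count M d) then 1 else 0))"
      proof
        fix d assume d: "d \<in> D"
        show "\<exists>\<psi>. (\<psi>,i) \<in> gtl2 l \<Omega> \<and> sd \<psi> \<le> Suc t \<and>
         (\<forall>(G,v)\<in>X. \<forall>\<nu>. \<nu> i = v \<longrightarrow> sem n G \<nu> \<psi> =
            (if (\<lambda>(G,v). real (count (N G v) d)) (G,v) = real (count M d) then 1 else 0))"
        proof -
          have pre: "\<forall>(G,v)\<in>X. \<forall>\<nu>. \<nu> i = v \<longrightarrow> sem n G \<nu> (\<kappa> d) = (\<lambda>(G,v). real (count (N G v) d)) (G,v)"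
            by (auto simp del: sem.simps simp: \<kappa>v[OF d _ refl])
          show ?thesis
            by (rule eq_ind[where g="\<lambda>(G,v). real (count (N G v) d)" and m="real (count M d)", OF X(1) i \<kappa>g[OF d] pre])
        qed
      qed
      from bchoice[OF this] obtain ind where ind: "\<forall>d\<in>D. (ind d,i) \<in> gtl2 l \<Omega> \<and> sd (ind d) \<le> Suc t \<and>
         (\<forall>(G,v)\<in>X. \<forall>\<nu>. \<nu> i = v \<longrightarrow> sem n G \<nu> (ind d) =
            (if (\<lambda>(G,v). real (count (N G v) d)) (G,v) = real (count M d) then 1 else 0))" by blast
      have "\<forall>d\<in>D. (ind d, i) \<in> gtl2 l \<Omega> \<and> sd (ind d) \<le> Suc t" using ind by blast
      from prod_formula[OF finD i this] obtain P where P: "(P,i) \<in> gtl2 l \<Omega>" "sd P \<le> Suc t"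
        "\<forall>G \<nu>. sem n G \<nu> P = (\<Prod>d\<in>D. sem n G \<nu> (ind d))" by blast
      from Suc.IH[rule_format, of i X c0, OF i X(1) X(2)] obtain \<chi>0 where \<chi>0: "(\<chi>0,i) \<in> gtl2 l \<Omega>" "sd \<chi>0 \<le> t"
         "\<forall>(G,v)\<in>X. \<forall>\<nu>. \<nu> i = v \<longrightarrow> sem n G \<nu> \<chi>0 = (if cr t G v = c0 then 1 else 0)" by blast
      have fg: "(Mul \<chi>0 P, i) \<in> gtl2 l \<Omega>" using \<chi>0(1) P(1) by (rule gtl2.mul)
      have fs: "sd (Mul \<chi>0 P) \<le> Suc t" using \<chi>0(2) P(2) by simp
      have key: "sem n G \<nu> (Mul \<chi>0 P) = (if cr (Suc t) G v = c then 1 else 0)"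
        if x: "(G,v) \<in> X" "\<nu> i = v" for G v \<nu>
      proof -
        have g: "is_graph n l G" using gX[OF x(1)] by blast
        have e0: "sem n G \<nu> \<chi>0 = (if cr t G v = c0 then 1 else 0)" using bspec[OF \<chi>0(3) x(1)] x(2) by simp
        have "sem n G \<nu> P = (\<Prod>d\<in>D. sem n G \<nu> (ind d))" using P(3) by blast
        also have "\<dots> = (\<Prod>d\<in>D. (if count (N G v) d = count M d then 1 else 0))"
        proof (rule prod.cong[OF refl])
          fix d assume "d \<in> D"
          with ind have h: "\<forall>(G,v)\<in>X. \<forall>\<nu>. \<nu> i = v \<longrightarrow> sem n G \<nu> (ind d) =
            (if (\<lambda>(G,v). real (count (N G v) d)) (G,v) = real (count M d) then 1 else 0)" by blast
          from bspec[OF h x(1)] x(2)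
          show "sem n G \<nu> (ind d) = (if count (N G v) d = count M d then 1 else 0)" by simp
        qed
        also have "\<dots> = (if \<forall>d\<in>D. count (N G v) d = count M d then 1 else 0)"
          by (rule prod_ind[OF finD])
        also have "(\<forall>d\<in>D. count (N G v) d = count M d) \<longleftrightarrow> N G v = M"
        proof
          assume h: "\<forall>d\<in>D. count (N G v) d = count M d"
          show "N G v = M"
          proof (rule multiset_eqI)
            fix d show "count (N G v) d = count M d"
            proof (cases "d \<in> D")
              case True then show ?thesis using h by blast
            next
              case False
              then have "d \<notin># M" "d \<notin> cr t G ` nbrs G v" unfolding D_def using x(1) by force+
              moreover have "set_mset (N G v) = cr t G ` nbrs G v" unfolding N_def using nbrs_fin[OF g] by simp
              ultimately show ?thesis by (metis count_eq_zero_iff)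
            qed
          qed
        qed simp
        finally have eP: "sem n G \<nu> P = (if N G v = M then 1 else 0)" .
        have "cr (Suc t) G v = Ref (cr t G v) (N G v)" unfolding N_def by simp
        then show ?thesis using e0 eP c by simp
      qed
      show ?thesis by (intro exI[of _ "Mul \<chi>0 P"] conjI fg fs) (auto simp del: sem.simps simp: key[OF _ refl])
    qed
  qed
qed

lemma pair_equiv:
  "((G,v),(H,w)) \<in> rho1_cr n l t \<longleftrightarrow> ((G,v),(H,w)) \<in> rho1_gtl n l \<Omega> t"
proof
  assume a: "((G,v),(H,w)) \<in> rho1_cr n l t"
  then have m: "(G,v) \<in> G1 n l" "(H,w) \<in> G1 n l" "cr t G v = cr t H w" by (auto simp: rho1_cr_def)
  have "sem n G (\<lambda>_. v) \<phi> = sem n H (\<lambda>_. w) \<phi>" if "(\<phi>, 1) \<in> gtl2 l \<Omega>" "sd \<phi> \<le> t" for \<phi>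
    using sound[OF that(1), of n, rule_format, OF that(2) m(1) m(2) m(3)] by simp
  then show "((G,v),(H,w)) \<in> rho1_gtl n l \<Omega> t" using m by (auto simp: rho1_gtl_def)
next
  assume a: "((G,v),(H,w)) \<in> rho1_gtl n l \<Omega> t"
  then have m: "(G,v) \<in> G1 n l" "(H,w) \<in> G1 n l"
    and eq: "\<And>\<phi>. (\<phi>, 1) \<in> gtl2 l \<Omega> \<Longrightarrow> sd \<phi> \<le> t \<Longrightarrow> sem n G (\<lambda>_. v) \<phi> = sem n H (\<lambda>_. w) \<phi>"
    by (auto simp: rho1_gtl_def)
  have X: "finite {(G,v),(H,w)}" "{(G,v),(H,w)} \<subseteq> G1 n l" using m by auto
  obtain \<chi> where \<chi>: "(\<chi>,1) \<in> gtl2 l \<Omega>" "sd \<chi> \<le> t"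
    "\<forall>(G',v')\<in>{(G,v),(H,w)}. \<forall>\<nu>. \<nu> 1 = v' \<longrightarrow> sem n G' \<nu> \<chi> = (if cr t G' v' = cr t G v then 1 else 0)"
    using complete[of n l \<Omega> t, rule_format, of 1 "{(G,v),(H,w)}" "cr t G v", OF _ X] by auto
  have "sem n G (\<lambda>_. v) \<chi> = 1" using bspec[OF \<chi>(3), of "(G,v)"] by simp
  moreover have "sem n H (\<lambda>_. w) \<chi> = (if cr t H w = cr t G v then 1 else 0)" using bspec[OF \<chi>(3), of "(H,w)"] by simp
  ultimately have "cr t G v = cr t H w" using eq[OF \<chi>(1,2)] by (auto split: if_splits)
  then show "((G,v),(H,w)) \<in> rho1_cr n l t" using m by (simp add: rho1_cr_def)
qed

theorem theorem3:
  fixes n l t :: nat and \<Omega> :: "(nat \<times> (real list \<Rightarrow> real)) set"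
  assumes "n \<ge> 1" and "l \<ge> 1"
    and "\<forall>(p, f)\<in>\<Omega>. p \<ge> 1"
  shows "rho1_cr n l t = rho1_gtl n l \<Omega> t"
proof (rule set_eqI)
  fix x :: "(graph \<times> nat) \<times> (graph \<times> nat)"
  obtain G v H w where x: "x = ((G,v),(H,w))" by (metis prod.collapse)
  show "x \<in> rho1_cr n l t \<longleftrightarrow> x \<in> rho1_gtl n l \<Omega> t" unfolding x by (rule pair_equiv)
qed

end
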